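(* Let $s\in(1/2,1)$, $0<k<2s$, and let $(J^s)$ satisfy Hypothesis (H1) below. Define, for $\varphi\in C^2(\mathbb{R}^d)$ with suitable growth, $$L^*_\varepsilon\varphi(x)=\frac{1}{\varepsilon^{2s}}\int_{\mathbb{R}^d}J^s_\varepsilon(y)\big[\varphi(x+y)-\varphi(x)\big]\,dy-x\cdot\nabla\varphi(x).$$ Then there exist constants $C_L,\lambda_L>0$ depending only on $k$, $d$ and the family $J$, but not on $\varepsilon\in(0,1]$ or $s$, such that for all $\varepsilon\in(0,1]$ $$L^*_\varepsilon(\langle x\rangle^k)\le C_L-\lambda_L\langle x\rangle^k\quad\text{for all }x\in\mathbb{R}^d.$$
   Context: $\langle x\rangle=(1+|x|^2)^{1/2}$; $J^s_\varepsilon(x)=\varepsilon^{-d}J^s(x/\varepsilon)$; Fourier transform $\hat f(\xi)=\int e^{-ix\cdot\xi}f(x)\,dx$; $L^1_2$ the space of $f$ with $\int(1+|x|^2)|f|<\infty$. Hypothesis (H1): $(J^s)_{s\in(1/2,1)}$ is a family of probability densities on $\mathbb{R}^d$ with $J^s\in L^1\cap L^p$ for some $p\in(1,\infty]$, such that (i) $\int\min\{1,|y|^2\}J^s(y)\,dy<\infty$; (ii) there exist $\delta>0$, $C_0>0$ independent of $s$ with $\hat J^s(\xi)=1-|\xi|^{2s}+R_s(\xi)$, $|R_s(\xi)|\le C_0|\xi|^{2s+\delta}$ for $|\xi|\le1$; (iii) there exist $C,R>0$, $\Psi\in L^1_2$ with $\int x\Psi=0$, independent of $s$, with $J^s(x)\le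 C(1-s)|x|^{-d-2s}+\Psi(x)$ for $|x|\ge R$. *)

theory Defs
  imports "HOL-Analysis.Analysis"
begin

definition jbr :: "'a::euclidean_space \<Rightarrow> real" where
  "jbr x = sqrt (1 + (norm x)\<^sup>2)"

definition fourier :: "('a::euclidean_space \<Rightarrow> real) \<Rightarrow> 'a \<Rightarrow> complex" where
  "fourier f \<xi> = integral\<^sup>L lborel (\<lambda>x. cis (- (x \<bullet> \<xi>)) * complex_of_real (f x))"

definition prob_density :: "('a::euclidean_space \<Rightarrow> real) \<Rightarrow> bool" where
  "prob_density f \<longleftrightarrow> f \<in> borel_measurable lborel \<and> (\<forall>x. 0 \<le> f x)
     \<and> integrable lborel f \<and> integral\<^sup>L lborel f = 1"

definition in_some_Lp :: "('a::euclidean_space \<Rightarrow> real) \<Rightarrow> bool" where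
  "in_some_Lp f \<longleftrightarrow>
     (\<exists>p::real. 1 < p \<and> integrable lborel (\<lambda>x. \<bar>f x\<bar> powr p))
     \<or> (\<exists>M. AE x in lborel. \<bar>f x\<bar> \<le> M)"

definition L1_2 :: "('a::euclidean_space \<Rightarrow> real) \<Rightarrow> bool" where
  "L1_2 f \<longleftrightarrow> f \<in> borel_measurable lborel
     \<and> integrable lborel (\<lambda>x. (1 + (norm x)\<^sup>2) * \<bar>f x\<bar>)"

definition H1 :: "(real \<Rightarrow> 'a::euclidean_space \<Rightarrow> real) \<Rightarrow> bool" where
  "H1 J \<longleftrightarrow>
    (\<forall>s. 1/2 < s \<and> s < 1 \<longrightarrow>
        prob_density (J s) \<and> in_some_Lp (J s)
        \<and> integrable lborel (\<lambda>y. min 1 ((norm y)\<^sup>2) * J s y))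
    \<and> (\<exists>\<delta> C0. 0 < \<delta> \<and> 0 < C0 \<and>
        (\<forall>s \<xi>. 1/2 < s \<and> s < 1 \<and> norm \<xi> \<le> 1 \<longrightarrow>
           cmod (fourier (J s) \<xi> - (1 - complex_of_real ((norm \<xi>) powr (2 * s))))
             \<le> C0 * (norm \<xi>) powr (2 * s + \<delta>)))
    \<and> (\<exists>C R \<Psi>. 0 < C \<and> 0 < R \<and> L1_2 \<Psi>
        \<and> integral\<^sup>L lborel (\<lambda>x. \<Psi> x *\<^sub>R x) = 0
        \<and> (\<forall>s x. 1/2 < s \<and> s < 1 \<and> R \<le> norm x \<longrightarrow>
             J s x \<le> C * (1 - s) * (norm x) powr (- real DIM('a) - 2 * s) + \<Psi> x))"

definition Jeps :: "(real \<Rightarrow> 'a::euclidean_space \<Rightarrow> real) \<Rightarrow> real \<Rightarrow> real \<Rightarrow> 'a \<Rightarrow> real" where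
  "Jeps J s \<epsilon> x = \<epsilon> powr (- real DIM('a)) * J s (x /\<^sub>R \<epsilon>)"

definition Lstar :: "(real \<Rightarrow> 'a::euclidean_space \<Rightarrow> real) \<Rightarrow> real \<Rightarrow> real
     \<Rightarrow> ('a \<Rightarrow> real) \<Rightarrow> 'a \<Rightarrow> real" where
  "Lstar J s \<epsilon> \<phi> x =
     \<epsilon> powr (- 2 * s) * integral\<^sup>L lborel (\<lambda>y. Jeps J s \<epsilon> y * (\<phi> (x + y) - \<phi> x))
     - frechet_derivative \<phi> (at x) x"

end

theory Submission
  imports Defs
begin

lemma nn_integral_scale:
  fixes f :: "'a::euclidean_space \<Rightarrow> ennreal" and c :: real
  assumes [measurable]: "f \<in> borel_measurable borel" and c: "c \<noteq> 0"
  shows "(\<integral>\<^sup>+x. f x \<partial>lborel) = ennreal (\<bar>c\<bar>^DIM('a)) * (\<integral>\<^sup>+x. f (c *\<^sub>R x) \<partial>lborel)"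
  by (subst lborel_affine[OF c, where t=0 and 'a='a])
     (simp add: nn_integral_density nn_integral_distr nn_integral_cmult)

lemma integrable_scale:
  fixes f :: "'a::euclidean_space \<Rightarrow> real" and c :: real
  assumes f: "integrable lborel f" and c: "c \<noteq> 0"
  shows "integrable lborel (\<lambda>x. f (c *\<^sub>R x))"
proof -
  have m[measurable]: "f \<in> borel_measurable borel" using f by auto
  have "(\<integral>\<^sup>+x. ennreal (norm (f x)) \<partial>lborel) < \<infinity>" using f unfolding integrable_iff_bounded by auto
  then have "ennreal (\<bar>c\<bar>^DIM('a)) * (\<integral>\<^sup>+x. ennreal (norm (f (c *\<^sub>R x))) \<partial>lborel) < \<infinity>"
    by (subst (asm) nn_integral_scale[OF _ c]) auto
  then have "(\<integral>\<^sup>+x. ennreal (norm (f (c *\<^sub>R x))) \<partial>lborel) < \<infinity>"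
    using c by (auto simp: ennreal_mult_less_top)
  then show ?thesis unfolding integrable_iff_bounded by auto
qed

lemma integrable_scale_iff:
  fixes f :: "'a::euclidean_space \<Rightarrow> real" and c :: real
  assumes c: "c \<noteq> 0"
  shows "integrable lborel (\<lambda>x. f (c *\<^sub>R x)) \<longleftrightarrow> integrable lborel f"
  using integrable_scale[of f c] integrable_scale[of "\<lambda>x. f (c *\<^sub>R x)" "1/c"] c
  by auto

lemma lborel_integral_scale:
  fixes f :: "'a::euclidean_space \<Rightarrow> real" and c :: real
  assumes c: "c \<noteq> 0"
  shows "(\<integral>x. f x \<partial>lborel) = \<bar>c\<bar>^DIM('a) * (\<integral>x. f (c *\<^sub>R x) \<partial>lborel)"
proof cases
  assume f[measurable]: "integrable lborel f" then show ?thesis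
    using c f f[THEN borel_measurable_integrable] integrable_scale[OF f c]
    by (subst lborel_affine[OF c, where t=0 and 'a='a])
       (simp add: integral_density integral_distr)
next
  assume "\<not> integrable lborel f" with c show ?thesis
    by (simp add: integrable_scale_iff not_integrable_integral_eq)
qed

lemma powr_shell_pt:
  fixes q \<rho> t :: real assumes "0 < \<rho>" "\<rho> \<le> t" "t \<le> 2*\<rho>"
  shows "t powr q \<le> 2 powr \<bar>q\<bar> * \<rho> powr q"
proof (cases "q \<ge> 0")
  case True
  have "t powr q \<le> (2*\<rho>) powr q" using assms True by (intro powr_mono2) auto
  also have "\<dots> = 2 powr \<bar>q\<bar> * \<rho> powr q" using True assms by (simp add: powr_mult)
  finally show ?thesis .
next
  case False
  have "t powr q \<le> \<rho> powr q" using assms False by (intro powr_mono2') auto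
  also have "\<dots> \<le> 2 powr \<bar>q\<bar> * \<rho> powr q" proof -
    have "1 \<le> 2 powr \<bar>q\<bar>" by (simp add: ge_one_powr_ge_zero)
    then show ?thesis using assms by (metis mult_le_cancel_right1 powr_gt_zero order_less_imp_not_less)
  qed
  finally show ?thesis .
qed

lemma shell_bound:
  fixes q \<rho> :: real assumes rho: "0 < \<rho>"
  shows "(\<integral>\<^sup>+z. indicator {z::'a::euclidean_space. \<rho> \<le> norm z \<and> norm z \<le> 2*\<rho>} z * ennreal (norm z powr q) \<partial>lborel)
     \<le> ennreal (2 powr \<bar>q\<bar> * 4^DIM('a) * \<rho> powr (q + DIM('a)))"
proof -
  let ?C = "cbox (-((2*\<rho>) *\<^sub>R One)) ((2*\<rho>) *\<^sub>R One) :: 'a set"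
  have "(\<integral>\<^sup>+z. indicator {z::'a. \<rho> \<le> norm z \<and> norm z \<le> 2*\<rho>} z * ennreal (norm z powr q) \<partial>lborel)
     \<le> (\<integral>\<^sup>+z. ennreal (2 powr \<bar>q\<bar> * \<rho> powr q) * indicator ?C z \<partial>lborel)"
  proof (intro nn_integral_mono)
    fix z :: 'a
    show "indicator {z::'a. \<rho> \<le> norm z \<and> norm z \<le> 2*\<rho>} z * ennreal (norm z powr q)
       \<le> ennreal (2 powr \<bar>q\<bar> * \<rho> powr q) * indicator ?C z"
    proof (cases "\<rho> \<le> norm z \<and> norm z \<le> 2*\<rho>")
      case True
      then have "z \<in> ?C" using Basis_le_norm[of _ z]
        by (force simp: mem_box abs_le_iff intro: order_trans)
      with True powr_shell_pt[OF rho, of "norm z" q] show ?thesis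
        by (auto simp: indicator_def intro!: ennreal_leI)
    next
      case False then show ?thesis by (auto simp: indicator_def)
    qed
  qed
  also have "\<dots> = ennreal (2 powr \<bar>q\<bar> * \<rho> powr q) * emeasure lborel ?C"
    by (rule nn_integral_cmult_indicator) auto
  also have "emeasure lborel ?C = ennreal ((4*\<rho>)^DIM('a))"
    using rho by (simp add: emeasure_lborel_cbox_eq inner_simps prod_constant)
  also have "ennreal (2 powr \<bar>q\<bar> * \<rho> powr q) * ennreal ((4*\<rho>)^DIM('a))
      = ennreal (2 powr \<bar>q\<bar> * 4^DIM('a) * \<rho> powr (q + DIM('a)))"
    using rho by (simp add: ennreal_mult'[symmetric] powr_add powr_realpow power_mult_distrib)
  finally show ?thesis .
qed

lemma pow2_bracket:
  fixes y :: real assumes "1 \<le> y"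
  shows "\<exists>j::nat. 2^j \<le> y \<and> y < 2^(Suc j)"
proof -
  obtain n :: nat where n: "y < 2^n" using real_arch_pow[of 2 y] by auto
  from ex_least_nat_le[of "\<lambda>n. y < 2^n" n] n assms
  obtain k where k: "k \<le> n" "\<forall>i<k. \<not> y < 2^i" "y < 2^k" by auto
  have "k \<noteq> 0" using k(3) assms by (cases k) auto
  then obtain j where "k = Suc j" by (cases k) auto
  with k have "2^j \<le> y" by (metis lessI not_less)
  with k \<open>k = Suc j\<close> show ?thesis by auto
qed

lemma nn_shells_le:
  fixes f :: "'a::euclidean_space \<Rightarrow> ennreal"
  assumes [measurable]: "f \<in> borel_measurable borel" "S \<in> sets borel" "\<And>j. T j \<in> sets borel"
    and cover: "\<And>z. z \<in> S \<Longrightarrow> f z \<noteq> 0 \<Longrightarrow> \<exists>j. z \<in> T j"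
  shows "(\<integral>\<^sup>+z. indicator S z * f z \<partial>lborel) \<le> (\<Sum>j. \<integral>\<^sup>+z. indicator (T j) z * f z \<partial>lborel)"
proof -
  have "(\<integral>\<^sup>+z. indicator S z * f z \<partial>lborel) \<le> (\<integral>\<^sup>+z. (\<Sum>j. indicator (T j) z * f z) \<partial>lborel)"
  proof (intro nn_integral_mono)
    fix z
    show "indicator S z * f z \<le> (\<Sum>j. indicator (T j) z * f z)"
    proof (cases "z \<in> S \<and> f z \<noteq> 0")
      case True
      then obtain j where j: "z \<in> T j" using cover by blast
      have "indicator S z * f z = (\<Sum>i\<in>{j}. indicator (T i) z * f z)" using True j by simp
      also have "\<dots> \<le> (\<Sum>j. indicator (T j) z * f z)"
        by (intro sum_le_suminf) auto
      finally show ?thesis .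
    next
      case False then show ?thesis by (auto simp: indicator_def)
    qed
  qed
  also have "\<dots> = (\<Sum>j. \<integral>\<^sup>+z. indicator (T j) z * f z \<partial>lborel)"
    by (intro nn_integral_suminf) auto
  finally show ?thesis .
qed

lemma outer_bound:
  fixes M \<gamma> :: real assumes M: "0 < M" and g: "0 < \<gamma>"
  shows "(\<integral>\<^sup>+z. indicator {z::'a::euclidean_space. M \<le> norm z} z * ennreal (norm z powr (- real DIM('a) - \<gamma>)) \<partial>lborel)
     \<le> ennreal (2 powr (DIM('a) + \<gamma>) * 4^DIM('a) * M powr (-\<gamma>) / (1 - 2 powr (-\<gamma>)))"
proof -
  define q where "q = - real DIM('a) - \<gamma>"
  define \<rho> where "\<rho> j = M * 2^j" for j :: nat
  define c where "c = 2 powr (DIM('a) + \<gamma>) * 4^DIM('a) * M powr (-\<gamma>)"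
  define \<theta> where "\<theta> = 2 powr (-\<gamma>)"
  have th: "0 < \<theta>" "\<theta> < 1" using g by (auto simp: \<theta>_def powr_less_one)
  have rho: "0 < \<rho> j" for j using M by (simp add: \<rho>_def)
  have "(\<integral>\<^sup>+z. indicator {z::'a. M \<le> norm z} z * ennreal (norm z powr q) \<partial>lborel)
     \<le> (\<Sum>j. \<integral>\<^sup>+z. indicator {z::'a. \<rho> j \<le> norm z \<and> norm z \<le> 2 * \<rho> j} z * ennreal (norm z powr q) \<partial>lborel)"
  proof (rule nn_shells_le)
    fix z :: 'a assume z: "z \<in> {z. M \<le> norm z}"
    then have "1 \<le> norm z / M" using M by auto
    then obtain j where j: "2^j \<le> norm z / M" "norm z / M < 2^Suc j" using pow2_bracket by blast
    then have "\<rho> j \<le> norm z \<and> norm z \<le> 2 * \<rho> j" using M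
      by (auto simp: \<rho>_def field_simps)
    then show "\<exists>j. z \<in> {z. \<rho> j \<le> norm z \<and> norm z \<le> 2 * \<rho> j}" by blast
  qed auto
  also have "\<dots> \<le> (\<Sum>j. ennreal (2 powr \<bar>q\<bar> * 4^DIM('a) * \<rho> j powr (q + DIM('a))))"
    by (intro suminf_le shell_bound rho) auto
  also have "(\<lambda>j. 2 powr \<bar>q\<bar> * 4^DIM('a) * \<rho> j powr (q + DIM('a))) = (\<lambda>j. c * \<theta>^j)"
  proof
    fix j :: nat
    have "\<rho> j powr (q + DIM('a)) = M powr (-\<gamma>) * (2^j) powr (-\<gamma>)"
      using M by (simp add: q_def \<rho>_def powr_mult)
    also have "(2::real)^j = 2 powr (real j)" by (simp add: powr_realpow)
    also have "(2 powr (real j)) powr (-\<gamma>) = \<theta>^j"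
      by (simp add: \<theta>_def powr_powr powr_realpow[symmetric] mult.commute)
    finally show "2 powr \<bar>q\<bar> * 4^DIM('a) * \<rho> j powr (q + DIM('a)) = c * \<theta>^j"
      using g by (simp add: c_def q_def add.commute)
  qed
  also have "(\<Sum>j. ennreal (c * \<theta>^j)) = ennreal (\<Sum>j. c * \<theta>^j)"
    using th by (intro suminf_ennreal2) (auto simp: c_def intro!: summable_mult summable_geometric)
  also have "(\<Sum>j. c * \<theta>^j) = c / (1 - \<theta>)"
    using th by (simp add: suminf_mult summable_geometric suminf_geometric)
  finally show ?thesis by (simp add: q_def c_def \<theta>_def)
qed

lemma inner_bound:
  fixes M a :: real assumes M: "0 < M" and a: "0 < a"
  shows "(\<integral>\<^sup>+z. indicator {z::'a::euclidean_space. norm z < M} z * ennreal (norm z powr (a - real DIM('a))) \<partial>lborel)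
     \<le> ennreal (2 powr \<bar>a - DIM('a)\<bar> * 4^DIM('a) * M powr a / (2 powr a - 1))"
proof -
  define q where "q = a - real DIM('a)"
  define \<rho> where "\<rho> j = M / 2^(Suc j)" for j :: nat
  define c where "c = 2 powr \<bar>q\<bar> * 4^DIM('a) * M powr a * 2 powr (-a)"
  define \<theta> where "\<theta> = 2 powr (-a)"
  have th: "0 < \<theta>" "\<theta> < 1" using a by (auto simp: \<theta>_def powr_less_one)
  have rho: "0 < \<rho> j" for j using M by (simp add: \<rho>_def)
  have "(\<integral>\<^sup>+z. indicator {z::'a. norm z < M} z * ennreal (norm z powr q) \<partial>lborel)
     \<le> (\<Sum>j. \<integral>\<^sup>+z. indicator {z::'a. \<rho> j \<le> norm z \<and> norm z \<le> 2 * \<rho> j} z * ennreal (norm z powr q) \<partial>lborel)"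
  proof (rule nn_shells_le)
    fix z :: 'a assume z: "z \<in> {z. norm z < M}" "ennreal (norm z powr q) \<noteq> 0"
    then have z0: "norm z > 0" by (cases "z = 0") auto
    then have "1 \<le> M / norm z" using z M by auto
    then obtain j where j: "2^j \<le> M / norm z" "M / norm z < 2^Suc j" using pow2_bracket by blast
    then have "\<rho> j \<le> norm z \<and> norm z \<le> 2 * \<rho> j" using M z0
      by (auto simp: \<rho>_def field_simps)
    then show "\<exists>j. z \<in> {z. \<rho> j \<le> norm z \<and> norm z \<le> 2 * \<rho> j}" by blast
  qed auto
  also have "\<dots> \<le> (\<Sum>j. ennreal (2 powr \<bar>q\<bar> * 4^DIM('a) * \<rho> j powr (q + DIM('a))))"
    by (intro suminf_le shell_bound rho) auto
  also have "(\<lambda>j. 2 powr \<bar>q\<bar> * 4^DIM('a) * \<rho> j powr (q + DIM('a))) = (\<lambda>j. c * \<theta>^j)"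
  proof
    fix j :: nat
    have "\<rho> j powr (q + DIM('a)) = M powr a * (2^Suc j) powr (-a)"
      using M by (simp add: q_def \<rho>_def powr_divide powr_minus_divide)
    also have "(2::real)^Suc j = 2 powr (real (Suc j))" by (rule powr_realpow[symmetric]) simp
    also have "(2 powr (real (Suc j))) powr (-a) = \<theta> * \<theta>^j"
      by (simp add: \<theta>_def powr_powr powr_realpow[symmetric] mult.commute powr_add[symmetric] algebra_simps)
    finally show "2 powr \<bar>q\<bar> * 4^DIM('a) * \<rho> j powr (q + DIM('a)) = c * \<theta>^j"
      by (simp add: c_def \<theta>_def)
  qed
  also have "(\<Sum>j. ennreal (c * \<theta>^j)) = ennreal (\<Sum>j. c * \<theta>^j)"
    using th by (intro suminf_ennreal2) (auto simp: c_def intro!: summable_mult summable_geometric)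
  also have "(\<Sum>j. c * \<theta>^j) = c / (1 - \<theta>)"
    using th by (simp add: suminf_mult summable_geometric suminf_geometric)
  also have "c / (1 - \<theta>) = 2 powr \<bar>a - DIM('a)\<bar> * 4^DIM('a) * M powr a / (2 powr a - 1)"
  proof -
    have "2 powr (-a) / (1 - 2 powr (-a)) = 1 / (2 powr a - 1)"
      using th a by (simp add: \<theta>_def powr_minus field_simps)
    moreover have "c / (1 - \<theta>) = 2 powr \<bar>q\<bar> * 4^DIM('a) * M powr a * (\<theta> / (1 - \<theta>))"
      by (simp add: c_def \<theta>_def)
    ultimately show ?thesis unfolding \<theta>_def q_def by simp
  qed
  finally show ?thesis by (simp add: q_def)
qed

lemma nn_bridge:
  fixes f :: "'a::euclidean_space \<Rightarrow> real"
  assumes [measurable]: "f \<in> borel_measurable borel" and f0: "\<And>z. 0 \<le> f z"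
    and c: "0 \<le> c" and le: "(\<integral>\<^sup>+z. ennreal (f z) \<partial>lborel) \<le> ennreal c"
  shows "integrable lborel f" "integral\<^sup>L lborel f \<le> c"
proof -
  have lt: "(\<integral>\<^sup>+z. ennreal (f z) \<partial>lborel) < \<infinity>"
    using le by (simp add: le_less_trans)
  show "integrable lborel f" unfolding integrable_iff_bounded using lt f0 by simp
  have "integral\<^sup>L lborel f = enn2real (\<integral>\<^sup>+z. ennreal (f z) \<partial>lborel)"
    by (rule integral_eq_nn_integral) (auto simp: f0)
  also have "\<dots> \<le> enn2real (ennreal c)" by (intro enn2real_mono le) simp
  also have "\<dots> = c" using c by simp
  finally show "integral\<^sup>L lborel f \<le> c" .
qed

lemma outer_int:
  fixes M \<gamma> :: real assumes M: "0 < M" and g: "0 < \<gamma>"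
  defines "f \<equiv> \<lambda>z::'a::euclidean_space. indicator {z. M \<le> norm z} z * norm z powr (- real DIM('a) - \<gamma>)"
  shows "integrable lborel f"
    "integral\<^sup>L lborel f \<le> 2 powr (DIM('a) + \<gamma>) * 4^DIM('a) * M powr (-\<gamma>) / (1 - 2 powr (-\<gamma>))"
proof -
  have c: "0 \<le> 2 powr (DIM('a) + \<gamma>) * 4^DIM('a) * M powr (-\<gamma>) / (1 - 2 powr (-\<gamma>))"
    using g by (simp add: powr_less_one less_imp_le)
  have e: "(\<lambda>z. ennreal (f z)) = (\<lambda>z. indicator {z::'a. M \<le> norm z} z * ennreal (norm z powr (- real DIM('a) - \<gamma>)))"
    by (auto simp: f_def indicator_def)
  have le: "(\<integral>\<^sup>+z. ennreal (f z) \<partial>lborel) \<le> ennreal (2 powr (DIM('a) + \<gamma>) * 4^DIM('a) * M powr (-\<gamma>) / (1 - 2 powr (-\<gamma>)))"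
    unfolding e by (rule outer_bound[OF M g])
  have m: "f \<in> borel_measurable borel" unfolding f_def by measurable
  have f0: "0 \<le> f z" for z by (simp add: f_def)
  show "integrable lborel f" "integral\<^sup>L lborel f \<le> 2 powr (DIM('a) + \<gamma>) * 4^DIM('a) * M powr (-\<gamma>) / (1 - 2 powr (-\<gamma>))"
    using nn_bridge[OF m f0 c le] by auto
qed

lemma inner_int:
  fixes M a :: real assumes M: "0 < M" and a: "0 < a"
  defines "f \<equiv> \<lambda>z::'a::euclidean_space. indicator {z. norm z < M} z * norm z powr (a - real DIM('a))"
  shows "integrable lborel f"
    "integral\<^sup>L lborel f \<le> 2 powr \<bar>a - DIM('a)\<bar> * 4^DIM('a) * M powr a / (2 powr a - 1)"
proof -
  have "1 < 2 powr a" using a by simp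
  then have c: "0 \<le> 2 powr \<bar>a - DIM('a)\<bar> * 4^DIM('a) * M powr a / (2 powr a - 1)"
    by simp
  have e: "(\<lambda>z. ennreal (f z)) = (\<lambda>z. indicator {z::'a. norm z < M} z * ennreal (norm z powr (a - real DIM('a))))"
    by (auto simp: f_def indicator_def)
  have le: "(\<integral>\<^sup>+z. ennreal (f z) \<partial>lborel) \<le> ennreal (2 powr \<bar>a - DIM('a)\<bar> * 4^DIM('a) * M powr a / (2 powr a - 1))"
    unfolding e by (rule inner_bound[OF M a])
  have m: "f \<in> borel_measurable borel" unfolding f_def by measurable
  have f0: "0 \<le> f z" for z by (simp add: f_def)
  show "integrable lborel f" "integral\<^sup>L lborel f \<le> 2 powr \<bar>a - DIM('a)\<bar> * 4^DIM('a) * M powr a / (2 powr a - 1)"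
    using nn_bridge[OF m f0 c le] by auto
qed

lemma tangent_powr:
  fixes u0 u1 p :: real assumes "0 \<le> u0" "0 \<le> u1" "0 \<le> p" "p \<le> 1"
  shows "(1+u1) powr p \<le> (1+u0) powr p + p * (1+u0) powr (p-1) * (u1 - u0)"
proof -
  define t where "t = (1+u1)/(1+u0)"
  have t: "t > 0" using assms by (simp add: t_def)
  have "t powr p * 1 powr (1-p) \<le> p*t + (1-p)*1"
    using assms t by (intro Youngs_inequality_0) auto
  then have y: "t powr p \<le> p*t + (1-p)" by simp
  have "(1+u1) powr p = (1+u0) powr p * t powr p"
    using assms by (simp add: t_def powr_divide)
  also have "\<dots> \<le> (1+u0) powr p * (p*t + (1-p))"
    using y by (intro mult_left_mono) auto
  also have "\<dots> = (1+u0) powr p + p * ((1+u0) powr p / (1+u0)) * (u1 - u0)"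
    using assms by (simp add: t_def field_simps)
  also have "(1+u0) powr p / (1+u0) = (1+u0) powr (p-1)"
    using assms by (simp add: powr_diff)
  finally show ?thesis .
qed

lemma jbr_pos: "jbr x > 0" by (simp add: jbr_def add_pos_nonneg)
lemma jbr_ge1: "jbr x \<ge> 1" by (simp add: jbr_def)
lemma jbr_sq: "(jbr x)^2 = 1 + (norm x)^2" by (simp add: jbr_def)
lemma norm_le_jbr: "norm x \<le> jbr x"
  unfolding jbr_def by (rule real_le_rsqrt) simp
lemma jbr_le: "jbr x \<le> 1 + norm x"
  unfolding jbr_def by (rule real_sqrt_le_iff[THEN iffD2, of _ "(1 + norm x)^2", simplified]) (auto simp: power2_eq_square algebra_simps)

lemma jbr_powr: "jbr x powr k = (1 + (norm x)^2) powr (k/2)"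
  unfolding jbr_def by (simp add: powr_half_sqrt[symmetric] powr_powr add_nonneg_nonneg)

lemma taylor_global:
  fixes x w :: "'a::euclidean_space" assumes k: "0 \<le> k" "k \<le> 2"
  shows "jbr (x+w) powr k - jbr x powr k - k * jbr x powr (k-2) * (x \<bullet> w)
      \<le> k/2 * jbr x powr (k-2) * (norm w)^2"
proof -
  have e: "jbr x powr (k-2) = (1 + (norm x)^2) powr (k/2 - 1)"
    by (simp add: jbr_powr diff_divide_distrib)
  have n: "(norm (x+w))^2 = (norm x)^2 + 2 * (x \<bullet> w) + (norm w)^2"
    by (simp add: power2_norm_eq_inner inner_simps inner_commute)
  have "(1 + (norm (x+w))^2) powr (k/2) \<le> (1 + (norm x)^2) powr (k/2)
      + k/2 * (1 + (norm x)^2) powr (k/2 - 1) * ((norm (x+w))^2 - (norm x)^2)"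
    using k by (intro tangent_powr) auto
  moreover have "k/2 * (1 + (norm x)^2) powr (k/2 - 1) * ((norm (x+w))^2 - (norm x)^2)
     = k * (1 + (norm x)^2) powr (k/2 - 1) * (x \<bullet> w) + k/2 * (1 + (norm x)^2) powr (k/2 - 1) * (norm w)^2"
    unfolding n by (simp add: algebra_simps)
  moreover have "k * jbr x powr (k-2) * (x \<bullet> w) = k * (1 + (norm x)^2) powr (k/2 - 1) * (x \<bullet> w)"
     "k/2 * jbr x powr (k-2) * (norm w)^2 = k/2 * (1 + (norm x)^2) powr (k/2 - 1) * (norm w)^2"
    using e by simp_all
  ultimately show ?thesis using jbr_powr[of "x+w" k] jbr_powr[of x k] by linarith
qed

lemma taylor_outer:
  fixes x w :: "'a::euclidean_space" assumes k: "0 \<le> k" and w: "jbr x / 2 \<le> norm w"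
  shows "jbr (x+w) powr k - jbr x powr k - k * jbr x powr (k-2) * (x \<bullet> w)
      \<le> 5 powr k * norm w powr k + k * jbr x powr (k-1) * norm w"
proof -
  have X1: "1 \<le> jbr x" by (rule jbr_ge1)
  have "jbr (x+w) \<le> 1 + norm (x+w)" by (rule jbr_le)
  also have "\<dots> \<le> 1 + norm x + norm w" using norm_triangle_ineq[of x w] by simp
  also have "\<dots> \<le> 5 * norm w" using norm_le_jbr[of x] X1 w by simp
  finally have a: "jbr (x+w) powr k \<le> 5 powr k * norm w powr k"
    using k jbr_pos[of "x+w"] by (simp add: powr_mono2 powr_mult[symmetric])
  have "- (k * jbr x powr (k-2) * (x \<bullet> w)) \<le> k * jbr x powr (k-2) * (norm x * norm w)"
  proof -
    have "- (x \<bullet> w) \<le> norm x * norm w" using Cauchy_Schwarz_ineq2[of x w] by simp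
    then have "k * jbr x powr (k-2) * (- (x \<bullet> w)) \<le> k * jbr x powr (k-2) * (norm x * norm w)"
      using k by (intro mult_left_mono) auto
    then show ?thesis by simp
  qed
  also have "\<dots> \<le> k * jbr x powr (k-2) * (jbr x * norm w)"
    using norm_le_jbr[of x] k by (intro mult_left_mono mult_right_mono) auto
  also have "\<dots> = k * jbr x powr (k-1) * norm w"
    using jbr_pos[of x] by (simp add: powr_diff powr_add field_simps powr_numeral power2_eq_square)
  finally have b: "- (k * jbr x powr (k-2) * (x \<bullet> w)) \<le> k * jbr x powr (k-1) * norm w" .
  have c: "0 \<le> jbr x powr k" by simp
  from a b c show ?thesis by linarith
qed

lemma deriv_jbr:
  fixes x :: "'a::euclidean_space"
  shows "((\<lambda>z. jbr z powr k) has_derivative (\<lambda>h. k * jbr x powr (k-2) * (x \<bullet> h))) (at x)"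
proof -
  have f: "(\<lambda>z::'a. jbr z powr k) = (\<lambda>z. (1 + z \<bullet> z) powr (k/2))"
    by (simp add: jbr_powr power2_norm_eq_inner)
  have "((\<lambda>z::'a. (1 + z \<bullet> z) powr (k/2)) has_derivative
     (\<lambda>h. k/2 * (1 + x \<bullet> x) powr (k/2 - 1) * (h \<bullet> x + x \<bullet> h))) (at x)"
  proof -
    have p: "0 < 1 + x \<bullet> x" by (simp add: add_pos_nonneg)
    have P1: "(1+x\<bullet>x) powr (k/2) = (1+x\<bullet>x) powr (k/2-1) * (1+x\<bullet>x)"
      using p powr_add[of "1+x\<bullet>x" "k/2-1" 1] by simp
    have p2: "2 + x\<bullet>x*2 \<noteq> 0" "2 + 2*(x\<bullet>x) \<noteq> 0" using p by auto
    show ?thesis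
      by (auto intro!: derivative_eq_intros ext simp: add_pos_nonneg P1 p2 field_simps)
  qed
  moreover have "jbr x powr (k-2) = (1 + x \<bullet> x) powr (k/2 - 1)"
    by (simp add: jbr_powr diff_divide_distrib power2_norm_eq_inner)
  ultimately show ?thesis unfolding f
    by (simp add: inner_commute algebra_simps)
qed

lemma outer_unif:
  fixes M \<gamma> \<gamma>0 :: real assumes M: "0 < M" and g: "0 < \<gamma>0" "\<gamma>0 \<le> \<gamma>" "\<gamma> \<le> 2"
  shows "integrable lborel (\<lambda>z::'a::euclidean_space. indicator {z. M \<le> norm z} z * norm z powr (- real DIM('a) - \<gamma>))"
    "(\<integral>z. indicator {z::'a. M \<le> norm z} z * norm z powr (- real DIM('a) - \<gamma>) \<partial>lborel)
      \<le> (2 powr (DIM('a) + 2) * 4^DIM('a) / (1 - 2 powr (-\<gamma>0))) * M powr (-\<gamma>)"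
proof -
  have g': "0 < \<gamma>" using g by simp
  show "integrable lborel (\<lambda>z::'a::euclidean_space. indicator {z. M \<le> norm z} z * norm z powr (- real DIM('a) - \<gamma>))"
    using outer_int(1)[OF M g'] by simp
  have a: "2 powr (DIM('a) + \<gamma>) \<le> 2 powr (DIM('a) + 2)" using g by simp
  have b0: "2 powr (-\<gamma>) \<le> 2 powr (-\<gamma>0)" using g by simp
  have b1: "2 powr (-\<gamma>0) < 1" using g by (simp add: powr_less_one)
  have hg: "2 powr (-\<gamma>) < 1" using g' by (simp add: powr_less_one)
  have b: "1 / (1 - 2 powr (-\<gamma>)) \<le> 1 / (1 - 2 powr (-\<gamma>0))"
  proof -
    have "2 powr (-\<gamma>) < 1" using g' by (simp add: powr_less_one)
    then have "0 < (1 - 2 powr (-\<gamma>)) * (1 - 2 powr (-\<gamma>0))" using b1 by (intro mult_pos_pos) auto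
    then show ?thesis using b0 by (intro divide_left_mono) auto
  qed
  have "2 powr (DIM('a) + \<gamma>) * 4^DIM('a) * M powr (-\<gamma>) / (1 - 2 powr (-\<gamma>))
      = (2 powr (DIM('a) + \<gamma>) * 4^DIM('a) * M powr (-\<gamma>)) * (1 / (1 - 2 powr (-\<gamma>)))" by simp
  also have "\<dots> \<le> (2 powr (DIM('a) + 2) * 4^DIM('a) * M powr (-\<gamma>)) * (1 / (1 - 2 powr (-\<gamma>0)))"
    using a b b1 hg by (intro mult_mono) auto
  also have "\<dots> = (2 powr (DIM('a) + 2) * 4^DIM('a) / (1 - 2 powr (-\<gamma>0))) * M powr (-\<gamma>)" by simp
  finally show "(\<integral>z. indicator {z::'a. M \<le> norm z} z * norm z powr (- real DIM('a) - \<gamma>) \<partial>lborel)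
      \<le> (2 powr (DIM('a) + 2) * 4^DIM('a) / (1 - 2 powr (-\<gamma>0))) * M powr (-\<gamma>)"
    using outer_int(2)[OF M g', where 'a='a] by simp
qed

lemma inner_unif:
  fixes M s :: real assumes M: "0 < M" and s: "1/2 < s" "s < 1"
  shows "integrable lborel (\<lambda>z::'a::euclidean_space. indicator {z. norm z < M} z * norm z powr ((2 - 2 * s) - real DIM('a)))"
    "(1 - s) * (\<integral>z. indicator {z::'a. norm z < M} z * norm z powr ((2 - 2 * s) - real DIM('a)) \<partial>lborel)
      \<le> (2 powr DIM('a) * 4^DIM('a)) * M powr (2 - 2 * s)"
proof -
  define a where "a = 2 - 2 * s"
  have a: "0 < a" "a \<le> 1" using s by (auto simp: a_def)
  show "integrable lborel (\<lambda>z::'a::euclidean_space. indicator {z. norm z < M} z * norm z powr ((2 - 2 * s) - real DIM('a)))"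
    using inner_int(1)[OF M a(1)] by (simp add: a_def)
  have d1: "1 \<le> real DIM('a)" by simp
  have "a \<le> 2 * real DIM('a)" using a DIM_positive[where 'a='a] by linarith
  then have "a - DIM('a) \<le> DIM('a)" "-(a - DIM('a)) \<le> DIM('a)" using a by linarith+
  then have "\<bar>a - DIM('a)\<bar> \<le> DIM('a)" by (simp only: abs_le_iff)
  then have c1: "2 powr \<bar>a - DIM('a)\<bar> \<le> 2 powr DIM('a)" by simp
  have ln2: "2/3 \<le> ln (2::real)" by (rule ln2_ge_two_thirds)
  have "1 + a * ln 2 \<le> exp (a * ln 2)" by (rule exp_ge_add_one_self)
  then have e2: "1 + a * ln 2 \<le> 2 powr a" by (simp add: powr_def mult.commute)
  have "a * (2/3) \<le> a * ln 2" using ln2 a by (intro mult_left_mono) auto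
  then have "1 - s \<le> 2 powr a - 1" using e2 a by (simp add: a_def) 
  then have q: "(1 - s) / (2 powr a - 1) \<le> 1" using a s
    by (subst divide_le_eq_1) auto
  have I: "(\<integral>z. indicator {z::'a. norm z < M} z * norm z powr (a - real DIM('a)) \<partial>lborel)
      \<le> 2 powr \<bar>a - DIM('a)\<bar> * 4^DIM('a) * M powr a / (2 powr a - 1)"
    by (rule inner_int(2)[OF M a(1)])
  have "(1 - s) * (\<integral>z. indicator {z::'a. norm z < M} z * norm z powr (a - real DIM('a)) \<partial>lborel)
      \<le> (1 - s) * (2 powr \<bar>a - DIM('a)\<bar> * 4^DIM('a) * M powr a / (2 powr a - 1))"
    using I s by (intro mult_left_mono) auto
  also have "\<dots> = (2 powr \<bar>a - DIM('a)\<bar> * 4^DIM('a) * M powr a) * ((1 - s) / (2 powr a - 1))" by simp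
  also have "\<dots> \<le> (2 powr DIM('a) * 4^DIM('a) * M powr a) * 1"
    using q c1 s a by (intro mult_mono) (auto intro!: divide_nonneg_nonneg)
  finally show "(1 - s) * (\<integral>z. indicator {z::'a. norm z < M} z * norm z powr ((2 - 2 * s) - real DIM('a)) \<partial>lborel)
      \<le> (2 powr DIM('a) * 4^DIM('a)) * M powr (2 - 2 * s)" by (simp add: a_def)
qed

lemma J_first_moment:
  fixes J \<Psi> :: "'a::euclidean_space \<Rightarrow> real"
  assumes Jm[measurable]: "J \<in> borel_measurable borel" and J0: "\<And>z. 0 \<le> J z" and Ji: "integrable lborel J"
    and \<Psi>m[measurable]: "\<Psi> \<in> borel_measurable borel"
    and \<Psi>i: "integrable lborel (\<lambda>z. (1 + (norm z)^2) * \<bar>\<Psi> z\<bar>)"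
    and R: "0 < R" and s: "1/2 < s" "s < 1" and Ct: "0 \<le> Ct"
    and tail: "\<And>z. R \<le> norm z \<Longrightarrow> J z \<le> Ct * (1-s) * norm z powr (- real DIM('a) - 2 * s) + \<Psi> z"
  shows "integrable lborel (\<lambda>z. J z * norm z)"
proof -
  define fo where "fo z = indicator {z::'a. R \<le> norm z} z * norm z powr (- real DIM('a) - (2 * s - 1))" for z
  have foi: "integrable lborel fo"
    unfolding fo_def using s by (intro outer_int(1)[OF R]) auto
  define g where "g z = R * J z + Ct * (1 - s) * fo z + (1 + (norm z)^2) * \<bar>\<Psi> z\<bar>" for z
  have gi: "integrable lborel g" unfolding g_def using Ji foi \<Psi>i by auto
  have fo0: "0 \<le> fo z" for z by (simp add: fo_def)
  show ?thesis
  proof (rule Bochner_Integration.integrable_bound[OF gi])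
    show "(\<lambda>z. J z * norm z) \<in> borel_measurable lborel" by measurable
    show "AE z in lborel. norm (J z * norm z) \<le> norm (g z)"
    proof (intro AE_I2)
      fix z :: 'a
      have t0: "0 \<le> Ct * (1 - s) * fo z" using Ct s fo0[of z] by simp
      have t1: "0 \<le> (1 + (norm z)^2) * \<bar>\<Psi> z\<bar>" by simp
      have nz: "norm z \<le> 1 + (norm z)^2"
      proof -
        have "0 \<le> (norm z - 1)^2" by simp
        then have h: "0 \<le> norm z * norm z - 2 * norm z + 1" by (simp add: power2_eq_square algebra_simps)
        have "0 \<le> norm z * norm z" by simp
        with h have "norm z \<le> 1 + norm z * norm z" by linarith
        then show ?thesis by (simp add: power2_eq_square)
      qed
      have "J z * norm z \<le> g z"
      proof (cases "R \<le> norm z")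
        case False
        then have "norm z \<le> R" by simp
        then have "J z * norm z \<le> J z * R" using J0[of z] by (intro mult_left_mono) auto
        then have "J z * norm z \<le> R * J z" by (simp add: mult.commute)
        then show ?thesis using t0 t1 unfolding g_def by linarith
      next
        case True
        have zp: "0 < norm z" using True R by linarith
        then have znz: "z \<noteq> 0" by auto
        have "J z * norm z \<le> (Ct * (1-s) * norm z powr (- real DIM('a) - 2 * s) + \<Psi> z) * norm z"
          using tail[OF True] by (intro mult_right_mono) auto
        also have "\<dots> = Ct * (1-s) * (norm z powr (- real DIM('a) - 2 * s) * norm z powr 1) + \<Psi> z * norm z"
          using zp by (simp add: algebra_simps)
        finally have c1: "J z * norm z \<le> Ct * (1-s) * (norm z powr (- real DIM('a) - 2 * s) * norm z powr 1) + \<Psi> z * norm z" .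
        have c2: "norm z powr (- real DIM('a) - 2 * s) * norm z powr 1 = fo z"
        proof -
          have "norm z powr (- real DIM('a) - 2 * s) * norm z powr 1 = norm z powr (- real DIM('a) - 2 * s + 1)"
            by (rule powr_add[symmetric])
          also have "- real DIM('a) - 2 * s + 1 = - real DIM('a) - (2 * s - 1)" by simp
          finally show ?thesis using True by (simp add: fo_def)
        qed
        have c3: "\<Psi> z * norm z \<le> (1 + (norm z)^2) * \<bar>\<Psi> z\<bar>"
        proof -
          have "\<Psi> z * norm z \<le> \<bar>\<Psi> z\<bar> * norm z" by (simp add: mult_right_mono)
          also have "\<dots> \<le> \<bar>\<Psi> z\<bar> * (1 + (norm z)^2)" using nz by (intro mult_left_mono) auto
          finally show ?thesis by (simp add: mult.commute)
        qed
        from c1 c2 c3 have "J z * norm z \<le> Ct * (1 - s) * fo z + (1 + (norm z)\<^sup>2) * \<bar>\<Psi> z\<bar>" by simp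
        moreover have "0 \<le> R * J z" using J0[of z] R by simp
        ultimately show ?thesis unfolding g_def by linarith
      qed
      moreover have "0 \<le> g z" unfolding g_def using J0[of z] R t0 t1 by simp
      ultimately show "norm (J z * norm z) \<le> norm (g z)" using J0[of z] by simp
    qed
  qed
qed

lemma pD_global:
  fixes x z :: "'a::euclidean_space"
  assumes k: "0 \<le> k" "k \<le> 2" and e: "0 < \<epsilon>"
  shows "\<epsilon> powr (-2 * s) * (jbr (x + \<epsilon> *\<^sub>R z) powr k - jbr x powr k - k * jbr x powr (k-2) * (x \<bullet> (\<epsilon> *\<^sub>R z)))
     \<le> k/2 * jbr x powr (k-2) * \<epsilon> powr (2 - 2 * s) * (norm z)^2"
proof -
  have t: "jbr (x + \<epsilon> *\<^sub>R z) powr k - jbr x powr k - k * jbr x powr (k-2) * (x \<bullet> (\<epsilon> *\<^sub>R z))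
      \<le> k/2 * jbr x powr (k-2) * (norm (\<epsilon> *\<^sub>R z))^2" by (rule taylor_global[OF k])
  have n: "(norm (\<epsilon> *\<^sub>R z))^2 = \<epsilon> powr 2 * (norm z)^2"
    using e by (simp add: power_mult_distrib powr_numeral)
  have ep: "\<epsilon> powr (-2 * s) * \<epsilon> powr 2 = \<epsilon> powr (2 - 2 * s)"
    by (simp add: powr_add[symmetric])
  have "\<epsilon> powr (-2 * s) * (jbr (x + \<epsilon> *\<^sub>R z) powr k - jbr x powr k - k * jbr x powr (k-2) * (x \<bullet> (\<epsilon> *\<^sub>R z)))
     \<le> \<epsilon> powr (-2 * s) * (k/2 * jbr x powr (k-2) * (\<epsilon> powr 2 * (norm z)^2))"
    using t n by (intro mult_left_mono) auto
  also have "\<dots> = k/2 * jbr x powr (k-2) * (\<epsilon> powr (-2 * s) * \<epsilon> powr 2) * (norm z)^2"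
    by (simp add: algebra_simps)
  finally show ?thesis unfolding ep .
qed

lemma pD_outer:
  fixes x z :: "'a::euclidean_space"
  assumes k: "0 \<le> k" and e: "0 < \<epsilon>" and w: "jbr x / 2 \<le> \<epsilon> * norm z"
  shows "\<epsilon> powr (-2 * s) * (jbr (x + \<epsilon> *\<^sub>R z) powr k - jbr x powr k - k * jbr x powr (k-2) * (x \<bullet> (\<epsilon> *\<^sub>R z)))
     \<le> 5 powr k * \<epsilon> powr (k - 2 * s) * norm z powr k + k * jbr x powr (k-1) * \<epsilon> powr (1 - 2 * s) * norm z"
proof -
  have nw: "norm (\<epsilon> *\<^sub>R z) = \<epsilon> * norm z" using e by simp
  have t: "jbr (x + \<epsilon> *\<^sub>R z) powr k - jbr x powr k - k * jbr x powr (k-2) * (x \<bullet> (\<epsilon> *\<^sub>R z))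
      \<le> 5 powr k * (\<epsilon> * norm z) powr k + k * jbr x powr (k-1) * (\<epsilon> * norm z)"
    using taylor_outer[OF k, of x "\<epsilon> *\<^sub>R z"] w unfolding nw by blast
  have e1: "\<epsilon> powr (-2 * s) * \<epsilon> powr k = \<epsilon> powr (k - 2 * s)"
    by (simp add: powr_add[symmetric])
  have e2: "\<epsilon> powr (-2 * s) * \<epsilon> = \<epsilon> powr (1 - 2 * s)"
    using e powr_add[of \<epsilon> "-2 * s" 1, symmetric] by simp
  have "\<epsilon> powr (-2 * s) * (jbr (x + \<epsilon> *\<^sub>R z) powr k - jbr x powr k - k * jbr x powr (k-2) * (x \<bullet> (\<epsilon> *\<^sub>R z)))
     \<le> \<epsilon> powr (-2 * s) * (5 powr k * (\<epsilon> * norm z) powr k + k * jbr x powr (k-1) * (\<epsilon> * norm z))"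
    using t by (intro mult_left_mono) auto
  also have "\<dots> = 5 powr k * (\<epsilon> powr (-2 * s) * \<epsilon> powr k) * norm z powr k
      + k * jbr x powr (k-1) * (\<epsilon> powr (-2 * s) * \<epsilon>) * norm z"
    using e by (simp add: powr_mult algebra_simps)
  finally show ?thesis unfolding e1 e2 .
qed

lemma sin_quot_lim:
  fixes t :: "nat \<Rightarrow> real" assumes t: "t \<longlonglongrightarrow> 0" "\<And>n. t n \<noteq> 0"
  shows "(\<lambda>n. sin (t n * a) / t n) \<longlonglongrightarrow> a"
proof -
  have "((\<lambda>h. sin (h * a)) has_field_derivative cos (0 * a) * a) (at 0)"
    by (auto intro!: derivative_eq_intros)
  then have "((\<lambda>h. (sin (h * a) - sin (0 * a)) / (h - 0)) \<longlongrightarrow> a) (at 0)"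
    unfolding has_field_derivative_iff by simp
  then have L: "((\<lambda>h. sin (h * a) / h) \<longlongrightarrow> a) (at 0)" by simp
  have "filterlim t (at 0) sequentially"
    using t by (intro filterlim_atI) auto
  from filterlim_compose[OF L this] show ?thesis by simp
qed

lemma Im_fourier:
  fixes J :: "'a::euclidean_space \<Rightarrow> real"
  assumes J: "integrable lborel J"
  shows "Im (fourier J \<xi>) = - (\<integral>z. J z * sin (z \<bullet> \<xi>) \<partial>lborel)"
proof -
  have m[measurable]: "J \<in> borel_measurable borel" using J by auto
  have ci: "integrable lborel (\<lambda>z. cis (- (z \<bullet> \<xi>)) * complex_of_real (J z))"
  proof (rule Bochner_Integration.integrable_bound[OF J])
    show "(\<lambda>z. cis (- (z \<bullet> \<xi>)) * complex_of_real (J z)) \<in> borel_measurable lborel"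
    proof -
      have [measurable]: "(\<lambda>x::'a. cis (- (x \<bullet> \<xi>))) \<in> borel_measurable borel"
        by (intro borel_measurable_continuous_onI continuous_intros)
      show ?thesis by measurable
    qed
    show "AE z in lborel. norm (cis (- (z \<bullet> \<xi>)) * complex_of_real (J z)) \<le> norm (J z)"
      by (simp add: norm_mult)
  qed
  have "Im (fourier J \<xi>) = (\<integral>z. Im (cis (- (z \<bullet> \<xi>)) * complex_of_real (J z)) \<partial>lborel)"
    unfolding fourier_def using integral_bounded_linear[OF bounded_linear_Im ci] by simp
  also have "\<dots> = (\<integral>z. - (J z * sin (z \<bullet> \<xi>)) \<partial>lborel)"
    by (simp add: mult.commute)
  also have "\<dots> = - (\<integral>z. J z * sin (z \<bullet> \<xi>) \<partial>lborel)" by simp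
  finally show ?thesis .
qed

lemma mean_zero:
  fixes J :: "'a::euclidean_space \<Rightarrow> real" and u :: 'a
  assumes J: "integrable lborel J" and J0: "\<And>z. 0 \<le> J z"
    and J1: "integrable lborel (\<lambda>z. J z * norm z)"
    and s: "1/2 < s" and dl: "0 < \<delta>"
    and F: "\<forall>\<xi>. norm \<xi> \<le> 1 \<longrightarrow> cmod (fourier J \<xi> - (1 - complex_of_real (norm \<xi> powr (2 * s))))
               \<le> C0 * norm \<xi> powr (2 * s + \<delta>)"
  shows "(\<integral>z. J z * (z \<bullet> u) \<partial>lborel) = 0"
proof (cases "u = 0")
  case True then show ?thesis by simp
next
  case False
  define nu where "nu = norm u"
  have nu: "0 < nu" using False by (simp add: nu_def)
  define t where "t n = inverse (real (Suc n)) * inverse (nu + 1)" for n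
  have tpos: "0 < t n" for n using nu by (simp add: t_def)
  have tnu: "t n * nu \<le> 1" for n
  proof -
    have "t n * nu = inverse (real (Suc n)) * (nu / (nu + 1))" by (simp add: t_def field_simps)
    also have "\<dots> \<le> 1 * 1" using nu
      by (intro mult_mono) (auto simp: field_simps)
    finally show ?thesis by simp
  qed
  have tlim: "t \<longlonglongrightarrow> 0"
    unfolding t_def by (intro tendsto_mult_left_zero LIMSEQ_inverse_real_of_nat)
  have m[measurable]: "J \<in> borel_measurable borel" using J by auto
  define S where "S n = (\<integral>z. J z * (sin (t n * (z \<bullet> u)) / t n) \<partial>lborel)" for n
  have conv: "S \<longlonglongrightarrow> (\<integral>z. J z * (z \<bullet> u) \<partial>lborel)"
    unfolding S_def
  proof (rule integral_dominated_convergence[where w="\<lambda>z. J z * norm z * nu"])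
    show "integrable lborel (\<lambda>z. J z * norm z * nu)" using J1 by simp
    show "AE z in lborel. (\<lambda>n. J z * (sin (t n * (z \<bullet> u)) / t n)) \<longlonglongrightarrow> J z * (z \<bullet> u)"
    proof (intro AE_I2)
      fix z :: 'a
      have "(\<lambda>n. sin (t n * (z \<bullet> u)) / t n) \<longlonglongrightarrow> z \<bullet> u"
        using tpos by (intro sin_quot_lim[OF tlim]) (simp add: less_imp_neq[OF tpos, symmetric])
      then show "(\<lambda>n. J z * (sin (t n * (z \<bullet> u)) / t n)) \<longlonglongrightarrow> J z * (z \<bullet> u)"
        by (rule tendsto_mult_left)
    qed
    show "AE z in lborel. norm (J z * (sin (t n * (z \<bullet> u)) / t n)) \<le> J z * norm z * nu" for n
    proof (intro AE_I2)
      fix z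
      have "\<bar>sin (t n * (z \<bullet> u))\<bar> / t n \<le> \<bar>t n * (z \<bullet> u)\<bar> / t n"
        using tpos[of n] abs_sin_x_le_abs_x by (intro divide_right_mono) auto
      also have "\<dots> = \<bar>z \<bullet> u\<bar>" using tpos[of n] by (simp add: abs_mult)
      also have "\<dots> \<le> norm z * nu" unfolding nu_def by (rule Cauchy_Schwarz_ineq2)
      finally have "\<bar>sin (t n * (z \<bullet> u))\<bar> / t n \<le> norm z * nu" .
      then have "J z * (\<bar>sin (t n * (z \<bullet> u))\<bar> / t n) \<le> J z * (norm z * nu)"
        using J0[of z] by (intro mult_left_mono) auto
      then show "norm (J z * (sin (t n * (z \<bullet> u)) / t n)) \<le> J z * norm z * nu"
        using J0[of z] tpos[of n] by (simp add: abs_mult mult.assoc)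
    qed
  qed auto
  define e where "e n = \<bar>C0\<bar> * nu * (t n * nu) powr \<delta>" for n
  have elim: "e \<longlonglongrightarrow> 0"
  proof -
    have "(\<lambda>n. (t n * nu) powr \<delta>) \<longlonglongrightarrow> 0"
      using tlim tpos nu dl
      by (intro tendsto_zero_powrI[where b=\<delta>] tendsto_mult_left_zero tendsto_const) (auto intro!: always_eventually less_imp_le)
    then show ?thesis unfolding e_def by (intro tendsto_mult_right_zero)
  qed
  have bnd: "norm (S n) \<le> e n" for n
  proof -
    have "\<bar>\<integral>z. J z * sin (z \<bullet> (t n *\<^sub>R u)) \<partial>lborel\<bar> = \<bar>Im (fourier J (t n *\<^sub>R u))\<bar>"
      by (simp add: Im_fourier[OF J])
    also have "\<dots> \<le> cmod (fourier J (t n *\<^sub>R u) - (1 - complex_of_real (norm (t n *\<^sub>R u) powr (2 * s))))"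
      using abs_Im_le_cmod[of "fourier J (t n *\<^sub>R u) - (1 - complex_of_real (norm (t n *\<^sub>R u) powr (2 * s)))"]
      by simp
    also have "\<dots> \<le> C0 * norm (t n *\<^sub>R u) powr (2 * s + \<delta>)"
      proof -
      have "norm (t n *\<^sub>R u) \<le> 1" using tpos[of n] tnu[of n] by (simp add: nu_def)
      then show ?thesis using F by blast
    qed
    also have "norm (t n *\<^sub>R u) = t n * nu" using tpos[of n] by (simp add: nu_def)
    finally have a: "\<bar>\<integral>z. J z * sin (t n * (z \<bullet> u)) \<partial>lborel\<bar> \<le> C0 * (t n * nu) powr (2 * s + \<delta>)"
      by simp
    have "(t n * nu) powr (2 * s + \<delta>) \<le> (t n * nu) powr (1 + \<delta>)"
      using tpos[of n] tnu[of n] nu s by (intro powr_mono') auto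
    also have "\<dots> = (t n * nu) * (t n * nu) powr \<delta>"
      using tpos[of n] nu by (simp add: powr_add)
    finally have b: "(t n * nu) powr (2 * s + \<delta>) \<le> (t n * nu) * (t n * nu) powr \<delta>" .
    have "C0 * (t n * nu) powr (2 * s + \<delta>) \<le> \<bar>C0\<bar> * ((t n * nu) * (t n * nu) powr \<delta>)"
      using b by (intro mult_mono) auto
    with a have c: "\<bar>\<integral>z. J z * sin (t n * (z \<bullet> u)) \<partial>lborel\<bar> \<le> t n * e n"
      by (simp add: e_def algebra_simps)
    have "S n = (\<integral>z. J z * sin (t n * (z \<bullet> u)) \<partial>lborel) / t n"
      unfolding S_def by (simp add: times_divide_eq_right)
    then have "norm (S n) = \<bar>\<integral>z. J z * sin (t n * (z \<bullet> u)) \<partial>lborel\<bar> / t n"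
      using tpos[of n] by simp
    also have "\<dots> \<le> e n" using c tpos[of n] by (simp add: divide_le_eq mult.commute)
    finally show ?thesis .
  qed
  have "S \<longlonglongrightarrow> 0"
    by (rule Lim_null_comparison[OF always_eventually elim]) (use bnd in auto)
  with conv show ?thesis using LIMSEQ_unique by blast
qed

lemma half_powr:
  fixes X a :: real assumes "0 < X"
  shows "(X / 2) powr a = X powr a * 2 powr (- a)"
proof -
  have "(X / 2) powr a = X powr a / 2 powr a" using assms by (simp add: powr_divide)
  also have "\<dots> = X powr a * (1 / 2 powr a)" by simp
  also have "1 / 2 powr a = 2 powr (- a)" by (simp add: powr_minus_divide)
  finally show ?thesis .
qed

lemma nonlocal_bound:
  fixes J \<Psi> :: "'a::euclidean_space \<Rightarrow> real" and x :: 'a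
  assumes Jm[measurable]: "J \<in> borel_measurable borel" and J0: "\<And>z. 0 \<le> J z" and Ji: "integrable lborel J"
    and Jint: "integral\<^sup>L lborel J = 1"
    and Jmean: "\<And>u. (\<integral>z. J z * (z \<bullet> u) \<partial>lborel) = 0"
    and J1: "integrable lborel (\<lambda>z. J z * norm z)"
    and \<Psi>m[measurable]: "\<Psi> \<in> borel_measurable borel"
    and \<Psi>i: "integrable lborel (\<lambda>z. (1 + (norm z)^2) * \<bar>\<Psi> z\<bar>)"
    and R: "0 < R" and Ct: "0 < Ct"
    and s: "s1 \<le> s" "s < 1" "1/2 < s1" and k: "0 < k" "k < 2 * s1"
    and e: "0 < \<epsilon>" "\<epsilon> \<le> 1"
    and tail: "\<And>z. R \<le> norm z \<Longrightarrow> J z \<le> Ct * (1-s) * norm z powr (- real DIM('a) - 2 * s) + \<Psi> z"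
  shows "\<epsilon> powr (- 2 * s) * (\<integral>z. J z * (jbr (x + \<epsilon> *\<^sub>R z) powr k - jbr x powr k) \<partial>lborel)
     \<le> k/2 * R^2 + k/2 * (\<integral>z. (1 + (norm z)^2) * \<bar>\<Psi> z\<bar> \<partial>lborel)
       + Ct * (k/2 * (2 powr DIM('a) * 4^DIM('a)) + (4 * 5 powr k + 2 * k) *
          (2 powr (DIM('a) + 2) * 4^DIM('a) / (1 - 2 powr (- min (2 * s1 - k) (2 * s1 - 1)))))"
    (is "_ \<le> ?K")
proof -
  define X where "X = jbr x"
  have X1: "1 \<le> X" unfolding X_def by (rule jbr_ge1)
  have Xp: "0 < X" using X1 by simp
  define M where "M = X / (2 * \<epsilon>)"
  have Mp: "0 < M" using Xp e by (simp add: M_def)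
  have eM: "\<epsilon> * M = X / 2" using e by (simp add: M_def)
  define \<gamma>0 where "\<gamma>0 = min (2 * s1 - k) (2 * s1 - 1)"
  have g0: "0 < \<gamma>0" using s k by (simp add: \<gamma>0_def)
  define Kin where "Kin = 2 powr DIM('a) * 4^DIM('a)"
  define Kout where "Kout = 2 powr (DIM('a) + 2) * 4^DIM('a) / (1 - 2 powr (-\<gamma>0))"
  define K\<Psi> where "K\<Psi> = (\<integral>z. (1 + (norm z)^2) * \<bar>\<Psi> z\<bar> \<partial>lborel)"
  have Kin0: "0 \<le> Kin" by (simp add: Kin_def)
  have Kout0: "0 \<le> Kout" using g0 by (simp add: Kout_def powr_less_one less_imp_le)
  have KPsi0: "0 \<le> K\<Psi>" unfolding K\<Psi>_def by (intro integral_nonneg_AE) auto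
  have K_eq: "?K = k/2 * R^2 + k/2 * K\<Psi> + Ct * (k/2 * Kin + (4 * 5 powr k + 2 * k) * Kout)"
    by (simp add: K\<Psi>_def Kin_def Kout_def \<gamma>0_def)
  have K0: "0 \<le> ?K" unfolding K_eq using k Ct KPsi0 Kin0 Kout0 by (intro add_nonneg_nonneg mult_nonneg_nonneg) auto
  have s12: "1/2 < s" using s by simp
  have k2: "k \<le> 2" using k s by simp

  define D where "D z = jbr (x + \<epsilon> *\<^sub>R z) powr k - X powr k - k * X powr (k-2) * (x \<bullet> (\<epsilon> *\<^sub>R z))" for z :: 'a
  define A where "A z = k/2 * X powr (k-2) * \<epsilon> powr (2 - 2 * s) * (norm z)^2" for z :: 'a
  define Ou where "Ou z = 5 powr k * \<epsilon> powr (k - 2 * s) * norm z powr k + k * X powr (k-1) * \<epsilon> powr (1 - 2 * s) * norm z" for z :: 'a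
  define G where "G z = (if M \<le> norm z then min (A z) (Ou z) else A z)" for z :: 'a
  have A0: "0 \<le> A z" for z using k by (simp add: A_def)
  have Ou0: "0 \<le> Ou z" for z using k by (simp add: Ou_def)
  have G0: "0 \<le> G z" for z using A0 Ou0 by (simp add: G_def)
  have GA: "G z \<le> A z" for z by (simp add: G_def)
  have Xk2: "X powr (k-2) \<le> 1" using X1 k2 powr_mono[of "k-2" 0 X] by simp
  have e22: "\<epsilon> powr (2 - 2 * s) \<le> 1" using e s powr_mono'[of 0 "2 - 2 * s" \<epsilon>] by simp
  have Ale: "A z \<le> k/2 * (norm z)^2" for z
  proof -
    have "X powr (k-2) * \<epsilon> powr (2 - 2 * s) \<le> 1 * 1"
      using Xk2 e22 by (intro mult_mono) auto
    then have "k/2 * (X powr (k-2) * \<epsilon> powr (2 - 2 * s)) * (norm z)^2 \<le> k/2 * 1 * (norm z)^2"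
      using k by (intro mult_right_mono mult_left_mono) auto
    then show ?thesis by (simp add: A_def mult.assoc)
  qed
  have pD: "\<epsilon> powr (-2 * s) * D z \<le> G z" for z
  proof -
    have a: "\<epsilon> powr (-2 * s) * D z \<le> A z"
      unfolding D_def A_def X_def using pD_global[of k \<epsilon> s x z] k2 k e by simp
    show ?thesis
    proof (cases "M \<le> norm z")
      case True
      then have "X / 2 \<le> \<epsilon> * norm z" using eM e by (metis mult_left_mono less_imp_le)
      then have "\<epsilon> powr (-2 * s) * D z \<le> Ou z"
        unfolding D_def Ou_def X_def using pD_outer[of k \<epsilon> x z s] k e by simp
      with a True show ?thesis by (simp add: G_def)
    next
      case False with a show ?thesis by (simp add: G_def)
    qed
  qed
  define fin where "fin z = indicator {z::'a. norm z < M} z * norm z powr ((2 - 2 * s) - real DIM('a))" for z :: 'a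
  define fo1 where "fo1 z = indicator {z::'a. M \<le> norm z} z * norm z powr (- real DIM('a) - (2 * s - k))" for z :: 'a
  define fo2 where "fo2 z = indicator {z::'a. M \<le> norm z} z * norm z powr (- real DIM('a) - (2 * s - 1))" for z :: 'a
  define ci where "ci = k/2 * X powr (k-2) * \<epsilon> powr (2 - 2 * s)"
  define c1 where "c1 = 5 powr k * \<epsilon> powr (k - 2 * s)"
  define c2 where "c2 = k * X powr (k-1) * \<epsilon> powr (1 - 2 * s)"
  define T where "T z = k/2 * R^2 * (J z * indicator {z::'a. norm z < R} z) + k/2 * ((1 + (norm z)^2) * \<bar>\<Psi> z\<bar>)
      + Ct * (1 - s) * (ci * fin z + c1 * fo1 z + c2 * fo2 z)" for z :: 'a
  have fin0: "0 \<le> fin z" for z by (simp add: fin_def)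
  have fo10: "0 \<le> fo1 z" for z by (simp add: fo1_def)
  have fo20: "0 \<le> fo2 z" for z by (simp add: fo2_def)
  have ci0: "0 \<le> ci" using k by (simp add: ci_def)
  have c10: "0 \<le> c1" by (simp add: c1_def)
  have c20: "0 \<le> c2" using k by (simp add: c2_def)
  have rest0: "0 \<le> Ct * (1 - s) * (ci * fin z + c1 * fo1 z + c2 * fo2 z)" for z
    using Ct s fin0 fo10 fo20 ci0 c10 c20 by (intro mult_nonneg_nonneg add_nonneg_nonneg) auto
  have JGT: "J z * G z \<le> T z" for z
  proof (cases "norm z < R")
    case True
    have "J z * G z \<le> J z * (k/2 * (norm z)^2)"
      using GA[of z] Ale[of z] J0[of z] by (intro mult_left_mono) auto
    also have "\<dots> \<le> J z * (k/2 * R^2)"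
      using True k J0[of z] by (intro mult_left_mono power_mono) auto
    finally have a: "J z * G z \<le> k/2 * R^2 * (J z * indicator {z::'a. norm z < R} z)"
      using True by (simp add: mult_ac)
    have b: "0 \<le> k/2 * ((1 + (norm z)^2) * \<bar>\<Psi> z\<bar>)" using k by simp
    show ?thesis unfolding T_def using a b rest0[of z] by linarith
  next
    case False
    then have Rz: "R \<le> norm z" by simp
    have zp: "0 < norm z" using Rz R by linarith
    have pw: "norm z powr (- real DIM('a) - 2 * s) * norm z powr b = norm z powr (- real DIM('a) - (2 * s - b))" for b
    proof -
      have "norm z powr (- real DIM('a) - 2 * s) * norm z powr b = norm z powr (- real DIM('a) - 2 * s + b)"
        by (rule powr_add[symmetric])
      also have "- real DIM('a) - 2 * s + b = - real DIM('a) - (2 * s - b)" by simp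
      finally show ?thesis .
    qed
    have "J z * G z \<le> (Ct * (1-s) * norm z powr (- real DIM('a) - 2 * s) + \<Psi> z) * G z"
      using tail[OF Rz] G0[of z] by (intro mult_right_mono) auto
    also have "\<dots> = Ct * (1-s) * (norm z powr (- real DIM('a) - 2 * s) * G z) + \<Psi> z * G z"
      by (simp add: algebra_simps)
    finally have c0: "J z * G z \<le> Ct * (1-s) * (norm z powr (- real DIM('a) - 2 * s) * G z) + \<Psi> z * G z" .
    have c1': "\<Psi> z * G z \<le> k/2 * ((1 + (norm z)^2) * \<bar>\<Psi> z\<bar>)"
    proof -
      have "\<Psi> z * G z \<le> \<bar>\<Psi> z\<bar> * G z" using G0[of z] by (intro mult_right_mono) auto
      also have "\<dots> \<le> \<bar>\<Psi> z\<bar> * (k/2 * (norm z)^2)"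
        using GA[of z] Ale[of z] by (intro mult_left_mono) auto
      also have "\<dots> \<le> \<bar>\<Psi> z\<bar> * (k/2 * (1 + (norm z)^2))"
        using k by (intro mult_left_mono) auto
      finally show ?thesis by (simp add: mult_ac)
    qed
    have c2': "norm z powr (- real DIM('a) - 2 * s) * G z \<le> ci * fin z + c1 * fo1 z + c2 * fo2 z"
    proof (cases "M \<le> norm z")
      case True
      have "norm z powr (- real DIM('a) - 2 * s) * G z \<le> norm z powr (- real DIM('a) - 2 * s) * Ou z"
        using True by (intro mult_left_mono) (auto simp: G_def)
      also have "\<dots> = c1 * (norm z powr (- real DIM('a) - 2 * s) * norm z powr k)
          + c2 * (norm z powr (- real DIM('a) - 2 * s) * norm z powr 1)"
        using zp by (simp add: Ou_def c1_def c2_def algebra_simps)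
      also have "\<dots> = c1 * fo1 z + c2 * fo2 z"
        unfolding pw using True by (simp add: fo1_def fo2_def)
      finally show ?thesis using True by (simp add: fin_def)
    next
      case False
      have "norm z powr (- real DIM('a) - 2 * s) * G z = ci * (norm z powr (- real DIM('a) - 2 * s) * norm z powr 2)"
        using False zp by (simp add: G_def A_def ci_def powr_numeral algebra_simps)
      also have "\<dots> = ci * fin z"
        unfolding pw using False by (simp add: fin_def algebra_simps)
      finally show ?thesis using False by (simp add: fo1_def fo2_def)
    qed
    have "Ct * (1-s) * (norm z powr (- real DIM('a) - 2 * s) * G z) \<le> Ct * (1-s) * (ci * fin z + c1 * fo1 z + c2 * fo2 z)"
      using c2' Ct s by (intro mult_left_mono) auto
    moreover have "0 \<le> k/2 * R^2 * (J z * indicator {z::'a. norm z < R} z)" using k J0[of z] by simp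
    ultimately show ?thesis unfolding T_def using c0 c1' by linarith
  qed
  have s2k: "\<gamma>0 \<le> 2 * s - k" "2 * s - k \<le> 2" using s k by (auto simp: \<gamma>0_def)
  have s21: "\<gamma>0 \<le> 2 * s - 1" "2 * s - 1 \<le> 2" using s k by (auto simp: \<gamma>0_def)
  have i_ind: "integrable lborel (\<lambda>z. J z * indicator {z::'a. norm z < R} z)"
    by (intro integrable_real_mult_indicator Ji) auto
  have i_fin: "integrable lborel fin"
    unfolding fin_def using inner_unif(1)[OF Mp s12 s(2), where 'a='a] by simp
  have i_fo1: "integrable lborel fo1"
    unfolding fo1_def by (rule outer_unif(1)[OF Mp g0 s2k])
  have i_fo2: "integrable lborel fo2"
    unfolding fo2_def by (rule outer_unif(1)[OF Mp g0 s21])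
  have i_T: "integrable lborel T"
    unfolding T_def using i_ind \<Psi>i i_fin i_fo1 i_fo2 by auto
  have int_T: "integral\<^sup>L lborel T = k/2 * R^2 * (\<integral>z. J z * indicator {z::'a. norm z < R} z \<partial>lborel) + k/2 * K\<Psi>
      + Ct * (1 - s) * (ci * integral\<^sup>L lborel fin + c1 * integral\<^sup>L lborel fo1 + c2 * integral\<^sup>L lborel fo2)"
    unfolding T_def K\<Psi>_def using i_ind \<Psi>i i_fin i_fo1 i_fo2 by simp
  have b1: "(\<integral>z. J z * indicator {z::'a. norm z < R} z \<partial>lborel) \<le> 1"
  proof -
    have "(\<integral>z. J z * indicator {z::'a. norm z < R} z \<partial>lborel) \<le> integral\<^sup>L lborel J"
      using i_ind Ji J0 by (intro integral_mono) (auto simp: indicator_def)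
    then show ?thesis using Jint by simp
  qed
  have XP: "X powr (k - 2 * s) \<le> 1" using X1 k s powr_mono[of "k - 2 * s" 0 X] by simp
  have b2: "(1 - s) * (ci * integral\<^sup>L lborel fin) \<le> k/2 * Kin"
  proof -
    have I: "(1 - s) * integral\<^sup>L lborel fin \<le> Kin * M powr (2 - 2 * s)"
      unfolding fin_def Kin_def using inner_unif(2)[OF Mp s12 s(2), where 'a='a] by simp
    have c_a: "ci * M powr (2 - 2 * s) = k/2 * X powr (k-2) * (\<epsilon> * M) powr (2 - 2 * s)"
      using e Mp by (simp add: ci_def powr_mult)
    have c_b: "(\<epsilon> * M) powr (2 - 2 * s) \<le> X powr (2 - 2 * s)"
      unfolding eM using Xp s by (intro powr_mono2) auto
    have c_c: "X powr (k-2) * X powr (2 - 2 * s) = X powr (k - 2 * s)"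
      by (simp add: powr_add[symmetric])
    have "k/2 * X powr (k-2) * (\<epsilon> * M) powr (2 - 2 * s) \<le> k/2 * X powr (k-2) * X powr (2 - 2 * s)"
      using c_b k by (intro mult_left_mono) auto
    then have "ci * M powr (2 - 2 * s) \<le> k/2 * (X powr (k-2) * X powr (2 - 2 * s))"
      using c_a by (simp add: mult.assoc)
    then have c: "ci * M powr (2 - 2 * s) \<le> k/2 * X powr (k - 2 * s)" using c_c by simp
    have "(1 - s) * (ci * integral\<^sup>L lborel fin) = ci * ((1 - s) * integral\<^sup>L lborel fin)" by simp
    also have "\<dots> \<le> ci * (Kin * M powr (2 - 2 * s))" using I ci0 by (intro mult_left_mono) auto
    also have "\<dots> = Kin * (ci * M powr (2 - 2 * s))" by simp
    also have "\<dots> \<le> Kin * (k/2 * X powr (k - 2 * s))" using c Kin0 by (intro mult_left_mono) auto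
    also have "\<dots> \<le> Kin * (k/2 * 1)" using XP Kin0 k by (intro mult_left_mono) auto
    finally show ?thesis by (simp only: mult.commute mult_1_right)
  qed
  have b3: "c1 * integral\<^sup>L lborel fo1 \<le> 4 * 5 powr k * Kout"
  proof -
    have I: "integral\<^sup>L lborel fo1 \<le> Kout * M powr (-(2 * s - k))"
      unfolding fo1_def Kout_def by (rule outer_unif(2)[OF Mp g0 s2k])
    have "c1 * M powr (-(2 * s - k)) = 5 powr k * (\<epsilon> * M) powr (k - 2 * s)"
      using e Mp by (simp add: c1_def powr_mult)
    also have "(\<epsilon> * M) powr (k - 2 * s) = X powr (k - 2 * s) * 2 powr (2 * s - k)"
    proof -
      have "(X / 2) powr (k - 2 * s) = X powr (k - 2 * s) * 2 powr (- (k - 2 * s))"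
        using Xp by (rule half_powr)
      then show ?thesis unfolding eM by simp
    qed
    also have "\<dots> \<le> 1 * 2 powr 2"
    proof -
      have "2 powr (2 * s - k) \<le> 2 powr 2" using s k by (intro powr_mono) auto
      then show ?thesis using XP by (intro mult_mono) auto
    qed
    finally have c: "c1 * M powr (-(2 * s - k)) \<le> 4 * 5 powr k" by simp
    have "c1 * integral\<^sup>L lborel fo1 \<le> c1 * (Kout * M powr (-(2 * s - k)))" using I c10 by (intro mult_left_mono) auto
    also have "\<dots> = Kout * (c1 * M powr (-(2 * s - k)))" by simp
    also have "\<dots> \<le> Kout * (4 * 5 powr k)" using c Kout0 by (intro mult_left_mono) auto
    also have "\<dots> = 4 * 5 powr k * Kout" by (simp only: mult_ac)
    finally show ?thesis .
  qed
  have b4: "c2 * integral\<^sup>L lborel fo2 \<le> 2 * k * Kout"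
  proof -
    have I: "integral\<^sup>L lborel fo2 \<le> Kout * M powr (-(2 * s - 1))"
      unfolding fo2_def Kout_def by (rule outer_unif(2)[OF Mp g0 s21])
    have "c2 * M powr (-(2 * s - 1)) = k * X powr (k-1) * (\<epsilon> * M) powr (1 - 2 * s)"
      using e Mp by (simp add: c2_def powr_mult)
    also have "(\<epsilon> * M) powr (1 - 2 * s) = X powr (1 - 2 * s) * 2 powr (2 * s - 1)"
    proof -
      have "(X / 2) powr (1 - 2 * s) = X powr (1 - 2 * s) * 2 powr (- (1 - 2 * s))"
        using Xp by (rule half_powr)
      then show ?thesis unfolding eM by simp
    qed
    also have "k * X powr (k-1) * (X powr (1 - 2 * s) * 2 powr (2 * s - 1)) = k * X powr (k - 2 * s) * 2 powr (2 * s - 1)"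
      by (simp add: powr_add[symmetric] mult_ac)
    also have "\<dots> \<le> k * 1 * 2 powr 1"
    proof -
      have "2 powr (2 * s - 1) \<le> 2 powr 1" using s k by (intro powr_mono) auto
      then show ?thesis using XP k by (intro mult_mono) auto
    qed
    finally have c: "c2 * M powr (-(2 * s - 1)) \<le> 2 * k" by simp
    have "c2 * integral\<^sup>L lborel fo2 \<le> c2 * (Kout * M powr (-(2 * s - 1)))" using I c20 by (intro mult_left_mono) auto
    also have "\<dots> = Kout * (c2 * M powr (-(2 * s - 1)))" by simp
    also have "\<dots> \<le> Kout * (2 * k)" using c Kout0 by (intro mult_left_mono) auto
    also have "\<dots> = 2 * k * Kout" by (simp only: mult_ac)
    finally show ?thesis .
  qed
  have fo1I0: "0 \<le> integral\<^sup>L lborel fo1" using fo10 by (intro integral_nonneg_AE) auto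
  have fo2I0: "0 \<le> integral\<^sup>L lborel fo2" using fo20 by (intro integral_nonneg_AE) auto
  have "(1 - s) * (c1 * integral\<^sup>L lborel fo1 + c2 * integral\<^sup>L lborel fo2)
      \<le> 1 * (c1 * integral\<^sup>L lborel fo1 + c2 * integral\<^sup>L lborel fo2)"
    using s fo1I0 fo2I0 c10 c20 by (intro mult_right_mono) auto
  then have b34: "(1 - s) * (c1 * integral\<^sup>L lborel fo1 + c2 * integral\<^sup>L lborel fo2) \<le> (4 * 5 powr k + 2 * k) * Kout"
    using b3 b4 by (simp add: algebra_simps)
  have TK: "integral\<^sup>L lborel T \<le> ?K"
  proof -
    have "integral\<^sup>L lborel T = k/2 * R^2 * (\<integral>z. J z * indicator {z::'a. norm z < R} z \<partial>lborel) + k/2 * K\<Psi>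
      + Ct * ((1 - s) * (ci * integral\<^sup>L lborel fin) + (1 - s) * (c1 * integral\<^sup>L lborel fo1 + c2 * integral\<^sup>L lborel fo2))"
      unfolding int_T by (simp add: algebra_simps)
    also have "\<dots> \<le> k/2 * R^2 * 1 + k/2 * K\<Psi> + Ct * (k/2 * Kin + (4 * 5 powr k + 2 * k) * Kout)"
      using b1 b2 b34 k Ct by (intro add_mono mult_left_mono order_refl) auto
    finally show ?thesis unfolding K_eq by simp
  qed
  define F where "F z = J z * (jbr (x + \<epsilon> *\<^sub>R z) powr k - jbr x powr k)" for z :: 'a
  show ?thesis
  proof (cases "integrable lborel F")
    case False
    then have "(\<integral>z. J z * (jbr (x + \<epsilon> *\<^sub>R z) powr k - jbr x powr k) \<partial>lborel) = 0"
      unfolding F_def by (simp add: not_integrable_integral_eq)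
    then show ?thesis using K0 by simp
  next
    case True
    define c where "c = k * X powr (k-2) * \<epsilon>"
    have Fdec: "F z = J z * D z + c * (J z * (z \<bullet> x))" for z
      by (simp add: F_def D_def c_def X_def algebra_simps inner_commute)
    have ix: "integrable lborel (\<lambda>z. J z * (z \<bullet> x))"
    proof (rule Bochner_Integration.integrable_bound)
      show "integrable lborel (\<lambda>z. norm x * (J z * norm z))" using J1 by simp
      show "(\<lambda>z. J z * (z \<bullet> x)) \<in> borel_measurable lborel" by measurable
      show "AE z in lborel. norm (J z * (z \<bullet> x)) \<le> norm (norm x * (J z * norm z))"
      proof (intro AE_I2)
        fix z :: 'a
        have "\<bar>z \<bullet> x\<bar> \<le> norm z * norm x" by (rule Cauchy_Schwarz_ineq2)
        then have "J z * \<bar>z \<bullet> x\<bar> \<le> J z * (norm z * norm x)" using J0[of z] by (intro mult_left_mono) auto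
        then show "norm (J z * (z \<bullet> x)) \<le> norm (norm x * (J z * norm z))"
          using J0[of z] by (simp add: abs_mult mult_ac)
      qed
    qed
    have iJD: "integrable lborel (\<lambda>z. J z * D z)"
    proof -
      have "integrable lborel (\<lambda>z. F z - c * (J z * (z \<bullet> x)))" using True ix by auto
      moreover have "(\<lambda>z. F z - c * (J z * (z \<bullet> x))) = (\<lambda>z. J z * D z)" by (simp add: Fdec)
      ultimately show ?thesis by simp
    qed
    have "integral\<^sup>L lborel F = (\<integral>z. J z * D z \<partial>lborel) + c * (\<integral>z. J z * (z \<bullet> x) \<partial>lborel)"
      unfolding Fdec using iJD ix by simp
    also have "(\<integral>z. J z * (z \<bullet> x) \<partial>lborel) = 0" by (rule Jmean)
    finally have IF: "integral\<^sup>L lborel F = (\<integral>z. J z * D z \<partial>lborel)" by simp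
    have "\<epsilon> powr (- 2 * s) * integral\<^sup>L lborel F = (\<integral>z. \<epsilon> powr (- 2 * s) * (J z * D z) \<partial>lborel)"
      unfolding IF by simp
    also have "\<dots> \<le> integral\<^sup>L lborel T"
    proof (rule integral_mono)
      show "integrable lborel (\<lambda>z. \<epsilon> powr (- 2 * s) * (J z * D z))" using iJD by simp
      show "integrable lborel T" by (rule i_T)
      fix z :: 'a
      have "\<epsilon> powr (- 2 * s) * (J z * D z) = J z * (\<epsilon> powr (-2 * s) * D z)" by simp
      also have "\<dots> \<le> J z * G z" using pD[of z] J0[of z] by (intro mult_left_mono) auto
      also have "\<dots> \<le> T z" by (rule JGT)
      finally show "\<epsilon> powr (- 2 * s) * (J z * D z) \<le> T z" .
    qed
    also have "\<dots> \<le> ?K" by (rule TK)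
    finally show ?thesis unfolding F_def .
  qed
qed

theorem theorem3p2:
  fixes J :: "real \<Rightarrow> 'a::euclidean_space \<Rightarrow> real"
    and k s1 :: real
  assumes "H1 J"
    and "1/2 < s1" and "s1 < 1"
    and "0 < k" and "k < 2 * s1"
  shows "\<exists>CL lamL. 0 < CL \<and> 0 < lamL \<and>
           (\<forall>s \<epsilon> x. s1 \<le> s \<and> s < 1 \<and> 0 < \<epsilon> \<and> \<epsilon> \<le> 1 \<longrightarrow>
              Lstar J s \<epsilon> (\<lambda>z. jbr z powr k) x \<le> CL - lamL * jbr x powr k)"
proof -
  have Ha: "\<forall>s. 1/2 < s \<and> s < 1 \<longrightarrow> prob_density (J s)"
    using assms(1) unfolding H1_def by blast
  obtain \<delta> C0 where dC: "0 < \<delta>" "0 < C0"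
    "\<forall>s \<xi>. 1/2 < s \<and> s < 1 \<and> norm \<xi> \<le> 1 \<longrightarrow>
           cmod (fourier (J s) \<xi> - (1 - complex_of_real ((norm \<xi>) powr (2 * s))))
             \<le> C0 * (norm \<xi>) powr (2 * s + \<delta>)"
    using assms(1) unfolding H1_def by blast
  obtain Ct R \<Psi> where CR: "0 < Ct" "0 < R" "L1_2 \<Psi>"
    "\<forall>s x. 1/2 < s \<and> s < 1 \<and> R \<le> norm x \<longrightarrow>
             J s x \<le> Ct * (1 - s) * (norm x) powr (- real DIM('a) - 2 * s) + \<Psi> x"
    using assms(1) unfolding H1_def by blast
  have \<Psi>m: "\<Psi> \<in> borel_measurable borel" and \<Psi>i: "integrable lborel (\<lambda>z. (1 + (norm z)^2) * \<bar>\<Psi> z\<bar>)"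
    using CR(3) unfolding L1_2_def by auto
  define K where "K = k/2 * R^2 + k/2 * (\<integral>z. (1 + (norm z)^2) * \<bar>\<Psi> z\<bar> \<partial>lborel)
       + Ct * (k/2 * (2 powr DIM('a) * 4^DIM('a)) + (4 * 5 powr k + 2 * k) *
          (2 powr (DIM('a) + 2) * 4^DIM('a) / (1 - 2 powr (- min (2 * s1 - k) (2 * s1 - 1)))))"
  have K0: "0 \<le> K"
  proof -
    have a: "0 \<le> (\<integral>z. (1 + (norm z)^2) * \<bar>\<Psi> z\<bar> \<partial>lborel)" by (intro integral_nonneg_AE) auto
    have g: "0 < min (2 * s1 - k) (2 * s1 - 1)" using assms by simp
    then have "2 powr (- min (2 * s1 - k) (2 * s1 - 1)) < 1" by (simp add: powr_less_one)
    then show ?thesis unfolding K_def using a assms CR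
      by (intro add_nonneg_nonneg mult_nonneg_nonneg) auto
  qed
  show ?thesis
  proof (intro exI conjI allI impI)
    show "0 < K + k" using K0 assms by simp
    show "0 < k" using assms by simp
    fix s \<epsilon> :: real and x :: 'a
    assume se: "s1 \<le> s \<and> s < 1 \<and> 0 < \<epsilon> \<and> \<epsilon> \<le> 1"
    have s12: "1/2 < s" using se assms by simp
    have pd: "prob_density (J s)" using Ha s12 se by blast
    have Jm: "J s \<in> borel_measurable borel" and J0: "\<And>z. 0 \<le> J s z" and Ji: "integrable lborel (J s)"
      and Jint: "integral\<^sup>L lborel (J s) = 1"
      using pd unfolding prob_density_def by auto
    have tail: "\<And>z. R \<le> norm z \<Longrightarrow> J s z \<le> Ct * (1-s) * norm z powr (- real DIM('a) - 2 * s) + \<Psi> z"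
      using CR(4) s12 se by blast
    have J1: "integrable lborel (\<lambda>z. J s z * norm z)"
      using J_first_moment[OF Jm J0 Ji \<Psi>m \<Psi>i CR(2) s12 _ _ tail] se CR(1) by simp
    have F: "\<forall>\<xi>. norm \<xi> \<le> 1 \<longrightarrow> cmod (fourier (J s) \<xi> - (1 - complex_of_real (norm \<xi> powr (2 * s))))
               \<le> C0 * norm \<xi> powr (2 * s + \<delta>)"
      using dC(3) s12 se by blast
    have Jmean: "\<And>u. (\<integral>z. J s z * (z \<bullet> u) \<partial>lborel) = 0"
      using mean_zero[OF Ji J0 J1 s12 dC(1) F] by blast
    have NB: "\<epsilon> powr (- 2 * s) * (\<integral>z. J s z * (jbr (x + \<epsilon> *\<^sub>R z) powr k - jbr x powr k) \<partial>lborel) \<le> K"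
      unfolding K_def
      using nonlocal_bound[OF Jm J0 Ji Jint Jmean J1 \<Psi>m \<Psi>i CR(2) CR(1), of s1 s k \<epsilon> x] se assms tail
      by blast
    have CV: "(\<integral>y. Jeps J s \<epsilon> y * (jbr (x + y) powr k - jbr x powr k) \<partial>lborel)
        = (\<integral>z. J s z * (jbr (x + \<epsilon> *\<^sub>R z) powr k - jbr x powr k) \<partial>lborel)"
    proof -
      have ep: "\<epsilon> \<noteq> 0" using se by simp
      have je: "\<And>z. Jeps J s \<epsilon> (\<epsilon> *\<^sub>R z) = \<epsilon> powr (- real DIM('a)) * J s z"
        using ep by (simp add: Jeps_def)
      have "(\<integral>y. Jeps J s \<epsilon> y * (jbr (x + y) powr k - jbr x powr k) \<partial>lborel)
         = \<bar>\<epsilon>\<bar>^DIM('a) * (\<integral>z. Jeps J s \<epsilon> (\<epsilon> *\<^sub>R z) * (jbr (x + \<epsilon> *\<^sub>R z) powr k - jbr x powr k) \<partial>lborel)"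
        by (rule lborel_integral_scale[OF ep])
      also have "\<dots> = \<bar>\<epsilon>\<bar>^DIM('a) * (\<epsilon> powr (- real DIM('a)) * (\<integral>z. J s z * (jbr (x + \<epsilon> *\<^sub>R z) powr k - jbr x powr k) \<partial>lborel))"
        by (simp add: je mult.assoc)
      also have "\<dots> = (\<bar>\<epsilon>\<bar>^DIM('a) * \<epsilon> powr (- real DIM('a))) * (\<integral>z. J s z * (jbr (x + \<epsilon> *\<^sub>R z) powr k - jbr x powr k) \<partial>lborel)"
        by (simp only: mult.assoc)
      also have "\<bar>\<epsilon>\<bar>^DIM('a) * \<epsilon> powr (- real DIM('a)) = 1"
        using se by (simp add: powr_minus powr_realpow)
      finally show ?thesis by simp
    qed
    define X where "X = jbr x"
    have X1: "1 \<le> X" unfolding X_def by (rule jbr_ge1)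
    have FD: "frechet_derivative (\<lambda>z. jbr z powr k) (at x) x = k * X powr (k-2) * (x \<bullet> x)"
      using frechet_derivative_at[OF deriv_jbr[of k x], symmetric] unfolding X_def by simp
    have xx: "x \<bullet> x = X^2 - 1" unfolding X_def by (simp add: jbr_sq power2_norm_eq_inner)
    have X2: "X powr (k-2) * X^2 = X powr k"
    proof -
      have "X powr (k-2) * X powr 2 = X powr (k - 2 + 2)" by (rule powr_add[symmetric])
      moreover have "X powr 2 = X^2" using X1 by (simp add: powr_numeral)
      ultimately show ?thesis by simp
    qed
    have "k * X powr (k-2) * (x \<bullet> x) = k * (X powr (k-2) * X^2) - k * X powr (k-2)"
      unfolding xx by (simp add: algebra_simps)
    also have "\<dots> = k * X powr k - k * X powr (k-2)" unfolding X2 ..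
    finally have e1: "k * X powr (k-2) * (x \<bullet> x) = k * X powr k - k * X powr (k-2)" .
    have "X powr (k-2) \<le> 1" using X1 assms powr_mono[of "k-2" 0 X] by simp
    then have "k * X powr (k-2) \<le> k" using assms by (intro mult_left_le) auto
    then have FD2: "frechet_derivative (\<lambda>z. jbr z powr k) (at x) x \<ge> k * X powr k - k"
      using FD e1 by linarith
    have "Lstar J s \<epsilon> (\<lambda>z. jbr z powr k) x
       = \<epsilon> powr (- 2 * s) * (\<integral>z. J s z * (jbr (x + \<epsilon> *\<^sub>R z) powr k - jbr x powr k) \<partial>lborel)
         - frechet_derivative (\<lambda>z. jbr z powr k) (at x) x"
      unfolding Lstar_def CV ..
    also have "\<dots> \<le> K - (k * X powr k - k)" using NB FD2 by linarith
    finally show "Lstar J s \<epsilon> (\<lambda>z. jbr z powr k) x \<le> K + k - k * jbr x powr k"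
      by (simp add: X_def)
  qed
qed


end
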